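(* Let $G$ be a compact vector space over $\mathbb{F}_2$, let $k\ge1$ with $\dim\widehat G\ge2k$, and put $\alpha=\sum_{i=1}^k4^{-i}$. Then: (i) for every subgroup $V\le\widehat G$ with $|V|\le 4^k-1$ one has $\{\alpha|V|\}(1-\{\alpha|V|\})\ge1/12$; (ii) there is a measurable set $A\subset G$ of density $\alpha$, namely a disjoint union of cosets $A_1,\dots,A_k$ with $\mu_G(A_i)=4^{-i}$, such that $\tfrac{k}{2}\le\|\chi_A\|_{A(G)}\le k$.
   Context: $G$ is a compact Hausdorff abelian group with $x+x=0$ for all $x$; $\widehat G$ its dual, a discrete $\mathbb{F}_2$-vector space; $\mu_G$ Haar probability measure; density of $A$ is $\mu_G(A)$; $\widehat f(\gamma)=\int_G f\overline\gamma\,d\mu_G$; $\|f\|_{A(G)}=\sum_{\gamma\in\widehat G}|\widehat f(\gamma)|$. $\{t\}$ is the fractional part of $t$. *)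

theory Defs
  imports "HOL-Probability.Probability"
begin

definition dual_group :: "('a::{ab_group_add,topological_space} \<Rightarrow> complex) set" where
  "dual_group = {\<gamma>. continuous_on UNIV \<gamma> \<and> (\<forall>x y. \<gamma> (x + y) = \<gamma> x * \<gamma> y)
                     \<and> (\<forall>x. norm (\<gamma> x) = 1)}"

definition dual_subgroup :: "('a::{ab_group_add,topological_space} \<Rightarrow> complex) set \<Rightarrow> bool" where
  "dual_subgroup V \<longleftrightarrow> V \<subseteq> dual_group \<and> (\<lambda>x. 1) \<in> V
     \<and> (\<forall>\<gamma>\<in>V. \<forall>\<delta>\<in>V. (\<lambda>x. \<gamma> x * \<delta> x) \<in> V)
     \<and> (\<forall>\<gamma>\<in>V. (\<lambda>x. cnj (\<gamma> x)) \<in> V)"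

text \<open>The dual, written multiplicatively, has F_2-dimension at least n:
  it contains n linearly independent elements (no nonempty subproduct is trivial).\<close>
definition f2_dim_ge :: "('a \<Rightarrow> complex) set \<Rightarrow> nat \<Rightarrow> bool" where
  "f2_dim_ge D n \<longleftrightarrow> (\<exists>S\<subseteq>D. finite S \<and> card S = n \<and>
      (\<forall>T\<subseteq>S. T \<noteq> {} \<longrightarrow> (\<lambda>x. \<Prod>\<gamma>\<in>T. \<gamma> x) \<noteq> (\<lambda>x. 1)))"

definition is_haar :: "'a::{ab_group_add,topological_space} measure \<Rightarrow> bool" where
  "is_haar M \<longleftrightarrow> prob_space M \<and> sets M = sets borel \<and>
     (\<forall>g. \<forall>A\<in>sets M. emeasure M ((\<lambda>x. g + x) ` A) = emeasure M A)"

definition add_subgroup :: "'a::ab_group_add set \<Rightarrow> bool" where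
  "add_subgroup H \<longleftrightarrow> 0 \<in> H \<and> (\<forall>x\<in>H. \<forall>y\<in>H. x + y \<in> H) \<and> (\<forall>x\<in>H. - x \<in> H)"

definition fourier_coeff :: "'a measure \<Rightarrow> ('a \<Rightarrow> complex) \<Rightarrow> ('a \<Rightarrow> complex) \<Rightarrow> complex" where
  "fourier_coeff M f \<gamma> = (\<integral>x. f x * cnj (\<gamma> x) \<partial>M)"

definition A_norm :: "'a::{ab_group_add,topological_space} measure \<Rightarrow> ('a \<Rightarrow> complex) \<Rightarrow> ennreal" where
  "A_norm M f = (\<Sum>\<^sub>\<infinity>\<gamma>\<in>dual_group. ennreal (norm (fourier_coeff M f \<gamma>)))"

definition alpha :: "nat \<Rightarrow> real" where
  "alpha k = (\<Sum>i=1..k. (1/4) ^ i)"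

end

theory Submission
  imports Defs
begin

lemma char_cont: "\<gamma> \<in> dual_group \<Longrightarrow> continuous_on UNIV \<gamma>"
  unfolding dual_group_def by blast

lemma char_norm: "\<gamma> \<in> dual_group \<Longrightarrow> norm (\<gamma> x) = 1"
  unfolding dual_group_def by blast

lemma char_mult: "\<gamma> \<in> dual_group \<Longrightarrow> \<gamma> (x + y) = \<gamma> x * \<gamma> y"
  unfolding dual_group_def by blast

lemma char_0:
  assumes "\<gamma> \<in> dual_group" shows "\<gamma> 0 = 1"
proof -
  have "\<gamma> (0 + 0) = \<gamma> 0 * \<gamma> 0" by (rule char_mult[OF assms])
  then have e: "\<gamma> 0 * 1 = \<gamma> 0 * \<gamma> 0" by simp
  have "\<gamma> 0 \<noteq> 0" using char_norm[OF assms, of 0] by auto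
  then show ?thesis using mult_left_cancel[of "\<gamma> 0" 1 "\<gamma> 0"] e by simp
qed

lemma char_sq:
  fixes \<gamma> :: "'a::{ab_group_add,topological_space} \<Rightarrow> complex"
  assumes "\<gamma> \<in> dual_group" "\<forall>x::'a::{ab_group_add,topological_space}. x + x = 0"
  shows "\<gamma> x * \<gamma> x = 1"
proof -
  have xx: "x + x = 0" using assms(2) by blast
  have "\<gamma> x * \<gamma> x = \<gamma> (x + x)" by (rule char_mult[OF assms(1), symmetric])
  also have "\<dots> = \<gamma> 0" by (simp only: xx)
  also have "\<dots> = 1" by (rule char_0[OF assms(1)])
  finally show ?thesis .
qed

lemma char_pm:
  fixes \<gamma> :: "'a::{ab_group_add,topological_space} \<Rightarrow> complex"
  assumes "\<gamma> \<in> dual_group" "\<forall>x::'a::{ab_group_add,topological_space}. x + x = 0"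
  shows "\<gamma> x = 1 \<or> \<gamma> x = -1"
proof -
  have "(\<gamma> x - 1) * (\<gamma> x + 1) = 0" using char_sq[OF assms, of x] by (simp add: algebra_simps)
  then have "\<gamma> x - 1 = 0 \<or> \<gamma> x + 1 = 0" by simp
  then show ?thesis by (auto simp: add_eq_0_iff2)
qed

lemma dual_one: "(\<lambda>x. 1) \<in> dual_group"
  unfolding dual_group_def by (simp add: continuous_on_const)

lemma dual_mult:
  assumes "\<gamma> \<in> dual_group" "\<delta> \<in> dual_group"
  shows "(\<lambda>x. \<gamma> x * \<delta> x) \<in> dual_group"
  unfolding dual_group_def
proof (intro CollectI conjI allI)
  show "continuous_on UNIV (\<lambda>x. \<gamma> x * \<delta> x)"
    by (rule continuous_on_mult[OF char_cont[OF assms(1)] char_cont[OF assms(2)]])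
  fix x y
  show "\<gamma> (x + y) * \<delta> (x + y) = \<gamma> x * \<delta> x * (\<gamma> y * \<delta> y)"
    using char_mult[OF assms(1)] char_mult[OF assms(2)] by (simp add: ac_simps)
next
  fix x show "norm (\<gamma> x * \<delta> x) = 1" using char_norm[OF assms(1)] char_norm[OF assms(2)] by (simp add: norm_mult)
qed

lemma dual_cnj:
  assumes "\<gamma> \<in> dual_group"
  shows "(\<lambda>x. cnj (\<gamma> x)) \<in> dual_group"
  unfolding dual_group_def
proof (intro CollectI conjI allI)
  show "continuous_on UNIV (\<lambda>x. cnj (\<gamma> x))"
    by (rule continuous_on_cnj[OF char_cont[OF assms]])
  fix x y
  show "cnj (\<gamma> (x + y)) = cnj (\<gamma> x) * cnj (\<gamma> y)" using char_mult[OF assms] by simp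
next
  fix x show "norm (cnj (\<gamma> x)) = 1" using char_norm[OF assms] by simp
qed

lemma dual_prod: "finite T \<Longrightarrow> (\<And>j. j \<in> T \<Longrightarrow> f j \<in> dual_group) \<Longrightarrow> (\<lambda>x. \<Prod>j\<in>T. f j x) \<in> dual_group"
proof (induction T rule: finite_induct)
  case empty then show ?case using dual_one by simp
next
  case (insert a F)
  then show ?case using dual_mult[of "f a" "\<lambda>x. \<Prod>j\<in>F. f j x"] by simp
qed

lemma haar_space: "is_haar M \<Longrightarrow> space M = UNIV"
proof -
  assume "is_haar M"
  then have "sets M = sets borel" unfolding is_haar_def by blast
  then have "space M = space borel" by (rule sets_eq_imp_space_eq)
  then show ?thesis by simp
qed

lemma char_meas: "is_haar M \<Longrightarrow> \<gamma> \<in> dual_group \<Longrightarrow> \<gamma> \<in> borel_measurable M"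
proof -
  assume h: "is_haar M" and g: "\<gamma> \<in> dual_group"
  have "sets M = sets borel" using h unfolding is_haar_def by blast
  then have "borel_measurable M = borel_measurable borel" by (rule measurable_cong_sets) simp
  then show ?thesis using borel_measurable_continuous_onI[OF char_cont[OF g]] by blast
qed

lemma char_integrable: "is_haar M \<Longrightarrow> \<gamma> \<in> dual_group \<Longrightarrow> integrable M \<gamma>"
proof -
  assume h: "is_haar M" and g: "\<gamma> \<in> dual_group"
  then interpret prob_space M unfolding is_haar_def by auto
  show ?thesis
  proof (rule integrable_const_bound[of _ 1])
    show "AE x in M. norm (\<gamma> x) \<le> 1" using char_norm[OF g] by simp
    show "\<gamma> \<in> borel_measurable M" by (rule char_meas[OF h g])
  qed
qed

lemma haar_distr:
  fixes M :: "'a::{ab_group_add,topological_space} measure"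
  assumes h: "is_haar M" and c: "continuous_on UNIV (\<lambda>p::'a \<times> 'a. fst p + snd p)"
  shows "distr M M (\<lambda>x. g + x) = M" and "(\<lambda>x. g + x) \<in> measurable M M"
proof -
  have cg: "continuous_on UNIV (\<lambda>x::'a. g + x)"
  proof -
    have "continuous_on UNIV ((\<lambda>p::'a \<times> 'a. fst p + snd p) \<circ> (\<lambda>x. (g, x)))"
      by (rule continuous_on_compose) (auto intro!: continuous_intros intro: continuous_on_subset[OF c])
    then show ?thesis by (simp add: o_def)
  qed
  have sM: "sets M = sets borel" using h unfolding is_haar_def by auto
  show mm: "(\<lambda>x. g + x) \<in> measurable M M"
    using borel_measurable_continuous_onI[OF cg] by (simp add: measurable_def sM haar_space[OF h] space_borel)
  show "distr M M (\<lambda>x. g + x) = M"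
  proof (rule measure_eqI)
    show "sets (distr M M ((+) g)) = sets M" by simp
    fix A assume "A \<in> sets (distr M M ((+) g))"
    then have A: "A \<in> sets M" by simp
    have "(\<lambda>x. g + x) -` A \<inter> space M = (\<lambda>x. (- g) + x) ` A"
    proof (intro equalityI subsetI)
      fix x assume "x \<in> (\<lambda>x. g + x) -` A \<inter> space M"
      then have "g + x \<in> A" by simp
      then show "x \<in> (\<lambda>x. (- g) + x) ` A" by (rule rev_image_eqI) simp
    next
      fix x assume "x \<in> (\<lambda>x. (- g) + x) ` A"
      then obtain a where "a \<in> A" "x = - g + a" by auto
      then show "x \<in> (\<lambda>x. g + x) -` A \<inter> space M" using haar_space[OF h] by simp
    qed
    note eq = this
    have inv: "\<forall>g. \<forall>A\<in>sets M. emeasure M ((\<lambda>x. g + x) ` A) = emeasure M A"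
      using h unfolding is_haar_def by blast
    have "emeasure (distr M M ((+) g)) A = emeasure M ((\<lambda>x. g + x) -` A \<inter> space M)"
      by (rule emeasure_distr[OF mm A])
    also have "\<dots> = emeasure M ((\<lambda>x. (- g) + x) ` A)" by (simp only: eq)
    also have "\<dots> = emeasure M A" using inv A by blast
    finally show "emeasure (distr M M ((+) g)) A = emeasure M A" .
  qed
qed

lemma char_integral:
  fixes M :: "'a::{ab_group_add,topological_space} measure"
  assumes h: "is_haar M" and c: "continuous_on UNIV (\<lambda>p::'a \<times> 'a. fst p + snd p)"
    and g: "\<gamma> \<in> dual_group"
  shows "integral\<^sup>L M \<gamma> = (if \<gamma> = (\<lambda>x. 1) then 1 else 0)"
proof (cases "\<gamma> = (\<lambda>x. 1)")
  case True
  interpret prob_space M using h unfolding is_haar_def by auto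
  show ?thesis using True by (simp add: prob_space)
next
  case False
  then obtain a where a: "\<gamma> a \<noteq> 1" by auto
  have "integral\<^sup>L M \<gamma> = integral\<^sup>L (distr M M (\<lambda>x. a + x)) \<gamma>" using haar_distr[OF h c] by simp
  also have "\<dots> = integral\<^sup>L M (\<lambda>x. \<gamma> (a + x))"
    by (rule integral_distr[OF haar_distr(2)[OF h c] char_meas[OF h g]])
  also have "\<dots> = \<gamma> a * integral\<^sup>L M \<gamma>" using char_mult[OF g] by simp
  finally have "(1 - \<gamma> a) * integral\<^sup>L M \<gamma> = 0" by (simp add: algebra_simps)
  then show ?thesis using a False by simp
qed

lemma geo_sum:
  "i \<le> k \<Longrightarrow> (\<Sum>j=Suc i..k. (1/4::real)^j) = ((1/4)^i - (1/4)^k) / 3"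
proof (induction k)
  case 0 then show ?case by simp
next
  case (Suc k)
  show ?case
  proof (cases "i = Suc k")
    case True then show ?thesis by simp
  next
    case False
    then have ik: "i \<le> k" using Suc by simp
    have "(\<Sum>j=Suc i..Suc k. (1/4::real)^j) = (\<Sum>j=Suc i..k. (1/4::real)^j) + (1/4)^Suc k"
      using ik by (simp add: sum.cl_ivl_Suc)
    also have "\<dots> = ((1/4)^i - (1/4)^k) / 3 + (1/4) * (1/4::real)^k" using Suc.IH[OF ik] by simp
    also have "\<dots> = ((1/4)^i - (1/4)^Suc k) / 3"
    proof -
      have "\<And>a b::real. (a - b)/3 + 1/4*b = (a - 1/4*b)/3" by (simp add: field_simps)
      then show ?thesis by (simp only: power_Suc)
    qed
    finally show ?thesis .
  qed
qed

lemma comb_upper: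
  fixes w :: "nat \<Rightarrow> nat set \<Rightarrow> complex"
  assumes nw: "\<And>i T. norm (w i T) = (1/4)^i"
  shows "(\<Sum>T\<in>Pow {0..<2*k}. norm (\<Sum>i\<in>{1..k}. if T \<subseteq> {0..<2*i} then w i T else 0)) \<le> real k"
proof -
  have "(\<Sum>T\<in>Pow {0..<2*k}. norm (\<Sum>i\<in>{1..k}. if T \<subseteq> {0..<2*i} then w i T else 0))
      \<le> (\<Sum>T\<in>Pow {0..<2*k}. \<Sum>i\<in>{1..k}. if T \<subseteq> {0..<2*i} then (1/4::real)^i else 0)"
  proof (rule sum_mono)
    fix T
    have "norm (\<Sum>i\<in>{1..k}. if T \<subseteq> {0..<2*i} then w i T else 0)
        \<le> (\<Sum>i\<in>{1..k}. norm (if T \<subseteq> {0..<2*i} then w i T else 0))" by (rule norm_sum)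
    also have "\<dots> = (\<Sum>i\<in>{1..k}. if T \<subseteq> {0..<2*i} then (1/4::real)^i else 0)"
      by (rule sum.cong) (auto simp: nw)
    finally show "norm (\<Sum>i\<in>{1..k}. if T \<subseteq> {0..<2*i} then w i T else 0)
        \<le> (\<Sum>i\<in>{1..k}. if T \<subseteq> {0..<2*i} then (1/4::real)^i else 0)" .
  qed
  also have "\<dots> = (\<Sum>i\<in>{1..k}. \<Sum>T\<in>Pow {0..<2*k}. if T \<subseteq> {0..<2*i} then (1/4::real)^i else 0)"
    by (rule sum.swap)
  also have "\<dots> = (\<Sum>i\<in>{1..k}. (1::real))"
  proof (rule sum.cong)
    fix i assume i: "i \<in> {1..k}"
    have "(\<Sum>T\<in>Pow {0..<2*k}. if T \<subseteq> {0..<2*i} then (1/4::real)^i else 0)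
        = (\<Sum>T\<in>{T \<in> Pow {0..<2*k}. T \<subseteq> {0..<2*i}}. (1/4::real)^i)"
      by (rule sum.inter_filter[symmetric]) simp
    also have "{T \<in> Pow {0..<2*k}. T \<subseteq> {0..<2*i}} = Pow {0..<2*i}" using i by auto
    also have "(\<Sum>T\<in>Pow {0..<2*i}. (1/4::real)^i) = 2^(2*i) * (1/4)^i" by (simp add: card_Pow)
    also have "\<dots> = 1" by (simp add: power_mult power_one_over)
    finally show "(\<Sum>T\<in>Pow {0..<2*k}. if T \<subseteq> {0..<2*i} then (1/4::real)^i else 0) = 1" .
  qed simp
  also have "\<dots> = real k" by simp
  finally show ?thesis .
qed

lemma level_bound:
  fixes w :: "nat \<Rightarrow> nat set \<Rightarrow> complex"
  assumes nw: "\<And>i T. norm (w i T) = (1/4)^i"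
    and i: "i \<in> {1..k}" and T: "T \<in> Pow {0..<2*i} - Pow {0..<2*(i-1)}"
  shows "norm (\<Sum>i\<in>{1..k}. if T \<subseteq> {0..<2*i} then w i T else 0) \<ge> (2/3) * (1/4)^i"
proof -
  define g where "g i' = (if T \<subseteq> {0..<2*i'} then w i' T else 0)" for i'
  have s: "(\<Sum>i\<in>{1..k}. g i) = g i + (\<Sum>i'\<in>{1..k}-{i}. g i')"
    using i by (simp add: sum.remove)
  have gi: "g i = w i T" using T unfolding g_def by auto
  have "norm (\<Sum>i'\<in>{1..k}-{i}. g i') \<le> (\<Sum>i'\<in>{1..k}-{i}. norm (g i'))" by (rule norm_sum)
  also have "\<dots> \<le> (\<Sum>i'\<in>{1..k}-{i}. if i < i' then (1/4::real)^i' else 0)"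
  proof (rule sum_mono)
    fix i' assume i': "i' \<in> {1..k}-{i}"
    show "norm (g i') \<le> (if i < i' then (1/4::real)^i' else 0)"
    proof (cases "i < i'")
      case True then show ?thesis unfolding g_def by (auto simp: nw)
    next
      case False
      then have "i' \<le> i - 1" using i' by auto
      then have "{0..<2*i'} \<subseteq> {0..<2*(i-1)}" by auto
      then have "\<not> T \<subseteq> {0..<2*i'}" using T by auto
      then show ?thesis unfolding g_def using False by simp
    qed
  qed
  also have "\<dots> = (\<Sum>i'\<in>{i' \<in> {1..k}-{i}. i < i'}. (1/4::real)^i')"
    by (rule sum.inter_filter[symmetric]) simp
  also have "{i' \<in> {1..k}-{i}. i < i'} = {Suc i..k}" using i by auto
  also have "(\<Sum>i'\<in>{Suc i..k}. (1/4::real)^i') = ((1/4)^i - (1/4)^k)/3"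
    using i by (intro geo_sum) auto
  also have "\<dots> \<le> (1/4)^i / 3" by simp
  finally have r: "norm (\<Sum>i'\<in>{1..k}-{i}. g i') \<le> (1/4)^i / 3" .
  have "norm (\<Sum>i\<in>{1..k}. g i) \<ge> norm (g i) - norm (\<Sum>i'\<in>{1..k}-{i}. g i')"
    unfolding s by (metis norm_diff_ineq)
  moreover have "norm (g i) = (1/4)^i" using gi nw[of i T] by simp
  ultimately have "norm (\<Sum>i\<in>{1..k}. g i) \<ge> (2/3) * (1/4)^i" using r by linarith
  then show ?thesis unfolding g_def .
qed

lemma comb_lower:
  fixes w :: "nat \<Rightarrow> nat set \<Rightarrow> complex"
  assumes nw: "\<And>i T. norm (w i T) = (1/4)^i"
  shows "real k / 2 \<le> (\<Sum>T\<in>Pow {0..<2*k}. norm (\<Sum>i\<in>{1..k}. if T \<subseteq> {0..<2*i} then w i T else 0))"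
proof -
  define c where "c T = norm (\<Sum>i\<in>{1..k}. if T \<subseteq> {0..<2*i} then w i T else 0)" for T
  define L where "L i = Pow {0..<2*i} - Pow {0..<2*(i-1)}" for i :: nat
  have Lsub: "(\<Union>i\<in>{1..k}. L i) \<subseteq> Pow {0..<2*k}" unfolding L_def by auto
  have disj: "\<forall>i\<in>{1..k}. \<forall>j\<in>{1..k}. i \<noteq> j \<longrightarrow> L i \<inter> L j = {}"
  proof (intro ballI impI)
    fix i j :: nat assume "i \<noteq> j"
    have "L a \<inter> L b = {}" if "a < b" for a b
    proof -
      have "{0..<2*a} \<subseteq> {0..<2*(b-1)}" using that by auto
      then show ?thesis unfolding L_def by auto
    qed
    then show "L i \<inter> L j = {}" using \<open>i \<noteq> j\<close> by (metis Int_commute linorder_neqE_nat)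
  qed
  have each: "(\<Sum>T\<in>L i. c T) \<ge> 1/2" if i: "i \<in> {1..k}" for i
  proof -
    have "(\<Sum>T\<in>L i. c T) \<ge> (\<Sum>T\<in>L i. (2/3) * (1/4::real)^i)"
    proof (rule sum_mono)
      fix T assume "T \<in> L i"
      then show "(2/3) * (1/4::real)^i \<le> c T"
        unfolding c_def using level_bound[where w=w and i=i and k=k and T=T, OF nw i] L_def by auto
    qed
    also have "(\<Sum>T\<in>L i. (2/3) * (1/4::real)^i) = real (card (L i)) * ((2/3) * (1/4)^i)" by simp
    also have "card (L i) = 2^(2*i) - 2^(2*(i-1))"
      unfolding L_def by (subst card_Diff_subset) (auto simp: card_Pow)
    also have "real (2^(2*i) - 2^(2*(i-1)) :: nat) = 3 * 4^(i-1)"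
    proof -
      obtain j where j: "i = Suc j" using i by (cases i) auto
      have "(2::nat)^(2*i) = 4 * 4^j" unfolding j by (simp add: power_mult)
      moreover have "(2::nat)^(2*(i-1)) = 4^j" unfolding j by (simp add: power_mult)
      ultimately show ?thesis unfolding j by simp
    qed
    also have "3 * 4^(i-1) * ((2/3) * (1/4::real)^i) = 1/2"
    proof -
      obtain j where j: "i = Suc j" using i by (cases i) auto
      show ?thesis unfolding j by (simp add: power_one_over)
    qed
    finally show ?thesis .
  qed
  have "real k / 2 = (\<Sum>i\<in>{1..k}. (1/2::real))" by simp
  also have "\<dots> \<le> (\<Sum>i\<in>{1..k}. \<Sum>T\<in>L i. c T)" by (rule sum_mono) (use each in auto)
  also have "\<dots> = (\<Sum>T\<in>(\<Union>i\<in>{1..k}. L i). c T)"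
    by (rule sum.UNION_disjoint[symmetric]) (use disj in \<open>auto simp: L_def\<close>)
  also have "\<dots> \<le> (\<Sum>T\<in>Pow {0..<2*k}. c T)"
    by (rule sum_mono2) (use Lsub in \<open>auto simp: c_def\<close>)
  finally show ?thesis unfolding c_def .
qed

lemma pow2_grow:
  fixes V :: "('a \<Rightarrow> complex) set"
  assumes fin: "finite V" and cl: "\<forall>\<gamma>\<in>V. \<forall>\<delta>\<in>V. (\<lambda>x. \<gamma> x * \<delta> x) \<in> V"
    and sq: "\<forall>\<gamma>\<in>V. \<forall>x. \<gamma> x * \<gamma> x = 1"
  shows "W \<subseteq> V \<Longrightarrow> (\<forall>\<gamma>\<in>W. \<forall>\<delta>\<in>W. (\<lambda>x. \<gamma> x * \<delta> x) \<in> W) \<Longrightarrow> card W = 2^m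
         \<Longrightarrow> \<exists>m'. card V = 2^m'"
proof (induction "card V - card W" arbitrary: W m rule: less_induct)
  case less
  note IH = less(1)
  have WV: "W \<subseteq> V" and clW: "\<forall>\<gamma>\<in>W. \<forall>\<delta>\<in>W. (\<lambda>x. \<gamma> x * \<delta> x) \<in> W"
    and cW: "card W = 2^m" using less.prems by auto
  show ?case
  proof (cases "W = V")
    case True then show ?thesis using cW by auto
  next
    case False
    then obtain \<delta> where d: "\<delta> \<in> V" "\<delta> \<notin> W" using WV by blast
    define W' where "W' = W \<union> (\<lambda>\<gamma>. \<lambda>x. \<delta> x * \<gamma> x) ` W"
    have finW: "finite W" using WV fin finite_subset by auto
    have dd: "\<delta> x * \<delta> x = 1" for x using sq d by auto
    have sqW: "\<gamma> x * \<gamma> x = 1" if "\<gamma> \<in> W" for \<gamma> x using sq that WV by auto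
    have sub: "W' \<subseteq> V"
    proof -
      have "(\<lambda>x. \<delta> x * \<gamma> x) \<in> V" if "\<gamma> \<in> W" for \<gamma>
        by (rule cl[rule_format, OF d(1)]) (use WV that in blast)
      then show ?thesis using WV unfolding W'_def by blast
    qed
    have cl': "\<forall>\<gamma>\<in>W'. \<forall>\<eta>\<in>W'. (\<lambda>x. \<gamma> x * \<eta> x) \<in> W'"
    proof (intro ballI)
      fix \<gamma> \<eta> assume g: "\<gamma> \<in> W'" and e: "\<eta> \<in> W'"
      have m: "(\<lambda>x. a x * b x) \<in> W" if "a \<in> W" "b \<in> W" for a b by (rule clW[rule_format, OF that])
      have f: "(\<lambda>x. a x * b x) \<in> W'" "(\<lambda>x. (\<delta> x * a x) * b x) \<in> W'"
            "(\<lambda>x. a x * (\<delta> x * b x)) \<in> W'" "(\<lambda>x. (\<delta> x * a x) * (\<delta> x * b x)) \<in> W'"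
        if a: "a \<in> W" and b: "b \<in> W" for a b
      proof -
        show "(\<lambda>x. a x * b x) \<in> W'" using m[OF a b] unfolding W'_def by auto
        show "(\<lambda>x. (\<delta> x * a x) * b x) \<in> W'"
        proof -
          have "(\<lambda>x. (\<delta> x * a x) * b x) = (\<lambda>x. \<delta> x * (a x * b x))" by (simp add: ac_simps)
          then show ?thesis using m[OF a b] unfolding W'_def by auto
        qed
        show "(\<lambda>x. a x * (\<delta> x * b x)) \<in> W'"
        proof -
          have "(\<lambda>x. a x * (\<delta> x * b x)) = (\<lambda>x. \<delta> x * (a x * b x))" by (simp add: ac_simps)
          then show ?thesis using m[OF a b] unfolding W'_def by auto
        qed
        have "(\<lambda>x. (\<delta> x * a x) * (\<delta> x * b x)) = (\<lambda>x. a x * b x)"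
        proof
          fix x
          have "(\<delta> x * a x) * (\<delta> x * b x) = (\<delta> x * \<delta> x) * (a x * b x)" by (simp add: ac_simps)
          then show "(\<delta> x * a x) * (\<delta> x * b x) = a x * b x" using dd by simp
        qed
        then show "(\<lambda>x. (\<delta> x * a x) * (\<delta> x * b x)) \<in> W'" using m[OF a b] unfolding W'_def by auto
      qed
      have g': "\<gamma> \<in> W \<or> (\<exists>a\<in>W. \<gamma> = (\<lambda>x. \<delta> x * a x))" using g unfolding W'_def by auto
      have e': "\<eta> \<in> W \<or> (\<exists>a\<in>W. \<eta> = (\<lambda>x. \<delta> x * a x))" using e unfolding W'_def by auto
      show "(\<lambda>x. \<gamma> x * \<eta> x) \<in> W'"
      proof -
        from g' show ?thesis
        proof
          assume gW: "\<gamma> \<in> W"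
          from e' show ?thesis
          proof
            assume eW: "\<eta> \<in> W" show ?thesis by (rule f(1)[OF gW eW])
          next
            assume "\<exists>a\<in>W. \<eta> = (\<lambda>x. \<delta> x * a x)"
            then obtain b where b: "b \<in> W" "\<eta> = (\<lambda>x. \<delta> x * b x)" by blast
            show ?thesis unfolding b(2) by (rule f(3)[OF gW b(1)])
          qed
        next
          assume "\<exists>a\<in>W. \<gamma> = (\<lambda>x. \<delta> x * a x)"
          then obtain a where a: "a \<in> W" "\<gamma> = (\<lambda>x. \<delta> x * a x)" by blast
          from e' show ?thesis
          proof
            assume eW: "\<eta> \<in> W" show ?thesis unfolding a(2) by (rule f(2)[OF a(1) eW])
          next
            assume "\<exists>a\<in>W. \<eta> = (\<lambda>x. \<delta> x * a x)"
            then obtain b where b: "b \<in> W" "\<eta> = (\<lambda>x. \<delta> x * b x)" by blast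
            show ?thesis unfolding a(2) b(2) by (rule f(4)[OF a(1) b(1)])
          qed
        qed
      qed
    qed
    have disj: "W \<inter> (\<lambda>\<gamma>. \<lambda>x. \<delta> x * \<gamma> x) ` W = {}"
    proof (rule ccontr)
      assume "W \<inter> (\<lambda>\<gamma>. \<lambda>x. \<delta> x * \<gamma> x) ` W \<noteq> {}"
      then obtain \<gamma> where g: "\<gamma> \<in> W" "(\<lambda>x. \<delta> x * \<gamma> x) \<in> W" by auto
      have "(\<lambda>x. (\<delta> x * \<gamma> x) * \<gamma> x) \<in> W" by (rule clW[rule_format, OF g(2) g(1)])
      moreover have "(\<lambda>x. (\<delta> x * \<gamma> x) * \<gamma> x) = \<delta>"
      proof
        fix x show "(\<delta> x * \<gamma> x) * \<gamma> x = \<delta> x" using sqW[OF g(1), of x] by (simp add: mult.assoc)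
      qed
      ultimately show False using d by simp
    qed
    have inj: "inj_on (\<lambda>\<gamma>. \<lambda>x. \<delta> x * \<gamma> x) W"
    proof (rule inj_onI)
      fix a b assume "a \<in> W" "b \<in> W" and e: "(\<lambda>x. \<delta> x * a x) = (\<lambda>x. \<delta> x * b x)"
      show "a = b"
      proof
        fix x
        have "\<delta> x * a x = \<delta> x * b x" using fun_cong[OF e, of x] by simp
        then have "\<delta> x * (\<delta> x * a x) = \<delta> x * (\<delta> x * b x)" by simp
        then show "a x = b x" using dd[of x] by (simp add: mult.assoc[symmetric])
      qed
    qed
    have cW': "card W' = 2^(Suc m)"
      unfolding W'_def using card_Un_disjoint[OF finW finite_imageI[OF finW] disj] card_image[OF inj] cW
      by simp
    have lt: "card V - card W' < card V - card W"
    proof -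
      have "card W' \<le> card V" using card_mono[OF fin sub] .
      moreover have "card W < card W'" using cW' cW by simp
      ultimately show ?thesis by linarith
    qed
    show ?thesis using IH[OF lt sub cl' cW'] .
  qed
qed

lemma card_pow2:
  fixes V :: "('a::{ab_group_add,topological_space} \<Rightarrow> complex) set"
  assumes "dual_subgroup V" "finite V" "\<forall>x::'a. x + x = 0"
  shows "\<exists>m. card V = 2^m"
proof (rule pow2_grow[of V "{\<lambda>x. 1}" 0])
  show "finite V" by fact
  show "\<forall>\<gamma>\<in>V. \<forall>\<delta>\<in>V. (\<lambda>x. \<gamma> x * \<delta> x) \<in> V" using assms unfolding dual_subgroup_def by auto
  show "\<forall>\<gamma>\<in>V. \<forall>x. \<gamma> x * \<gamma> x = 1" using assms char_sq unfolding dual_subgroup_def by blast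
  show "{\<lambda>x. 1} \<subseteq> V" using assms unfolding dual_subgroup_def by auto
qed auto

lemma alpha_closed: "alpha k = (1 - (1/4)^k) / 3"
  using geo_sum[of 0 k] unfolding alpha_def by simp

lemma pow2_mod3: "(2::nat)^m mod 3 = 1 \<or> (2::nat)^m mod 3 = 2"
proof (induction m)
  case 0 then show ?case by simp
next
  case (Suc m)
  have "(2::nat)^Suc m mod 3 = (2 * (2^m mod 3)) mod 3" by (simp add: mod_mult_right_eq)
  then show ?case using Suc by auto
qed

lemma frac_part:
  assumes "(2::nat)^m \<le> 4^k - 1"
  shows "frac (alpha k * real (2^m)) * (1 - frac (alpha k * real (2^m))) \<ge> 1/12"
proof -
  define N :: nat where "N = 2^m"
  define q where "q = N div 3"
  define r where "r = N mod 3"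
  have Nqr: "N = 3 * q + r" unfolding q_def r_def by simp
  have r12: "r = 1 \<or> r = 2" using pow2_mod3[of m] unfolding r_def N_def by simp
  have "(0::nat) < 4^k" by simp
  then have "(2::nat)^m < 4^k" using assms by linarith
  also have "(4::nat)^k = 2^(2*k)" by (simp add: power_mult)
  finally have "m < 2*k" by simp
  then have "(2::nat)^(Suc m) \<le> 2^(2*k)" by (intro power_increasing) auto
  then have "2 * N \<le> 4^k" unfolding N_def by (simp add: power_mult)
  then have "real (2 * N) \<le> real (4^k)" by (simp only: of_nat_le_iff)
  then have le: "2 * real N \<le> 4^k" by simp
  define d where "d = real N / 4^k"
  have d0: "0 < d" unfolding d_def N_def by simp
  have d1: "d \<le> 1/2" unfolding d_def using le by (simp add: field_simps)
  have eq: "alpha k * real N = real q + (real r - d) / 3"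
    unfolding alpha_closed d_def using Nqr by (simp add: field_simps power_one_over)
  define t where "t = (real r - d) / 3"
  have ft: "frac (alpha k * real N) = t"
    unfolding frac_unique_iff eq t_def using r12 d0 d1 by auto
  have t1: "1/6 \<le> t" "t \<le> 5/6" unfolding t_def using r12 d0 d1 by auto
  have "t * (1 - t) - 5/36 = (t - 1/6) * (5/6 - t)" by (simp add: field_simps)
  moreover have "(t - 1/6) * (5/6 - t) \<ge> 0" using t1 by simp
  ultimately have "t * (1 - t) \<ge> 1/12" by linarith
  then show ?thesis using ft unfolding N_def by simp
qed

lemma norm1_cnj: "norm (z::complex) = 1 \<Longrightarrow> z * cnj z = 1"
  using complex_norm_square[of z] by simp

lemma char_orth:
  fixes M :: "'a::{ab_group_add,topological_space} measure"
  assumes h: "is_haar M" and c: "continuous_on UNIV (\<lambda>p::'a \<times> 'a. fst p + snd p)"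
    and a: "a \<in> dual_group" and b: "b \<in> dual_group"
  shows "integral\<^sup>L M (\<lambda>x. a x * cnj (b x)) = (if a = b then 1 else 0)"
proof -
  have d: "(\<lambda>x. a x * cnj (b x)) \<in> dual_group" by (rule dual_mult[OF a dual_cnj[OF b]])
  have "((\<lambda>x. a x * cnj (b x)) = (\<lambda>x. 1)) \<longleftrightarrow> a = b"
  proof
    assume e: "(\<lambda>x. a x * cnj (b x)) = (\<lambda>x. 1)"
    show "a = b"
    proof
      fix x
      have "a x * cnj (b x) = 1" using fun_cong[OF e, of x] by simp
      then have "a x * cnj (b x) * b x = b x" by simp
      moreover have "cnj (b x) * b x = 1" using norm1_cnj[OF char_norm[OF b, of x]] by (simp add: mult.commute)
      ultimately show "a x = b x" by (simp add: mult.assoc)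
    qed
  next
    assume "a = b"
    then show "(\<lambda>x. a x * cnj (b x)) = (\<lambda>x. 1)" using norm1_cnj char_norm[OF b] by auto
  qed
  then show ?thesis using char_integral[OF h c d] by simp
qed

definition Xc :: "(nat \<Rightarrow> 'a \<Rightarrow> complex) \<Rightarrow> nat set \<Rightarrow> 'a \<Rightarrow> complex" where
  "Xc chi T = (\<lambda>x. \<Prod>j\<in>T. chi j x)"

definition eps :: "nat \<Rightarrow> nat \<Rightarrow> complex" where
  "eps i j = (if j < 2*i - 2 then 1 else -1)"

definition Aset :: "(nat \<Rightarrow> 'a \<Rightarrow> complex) \<Rightarrow> nat \<Rightarrow> 'a set" where
  "Aset chi i = {x. \<forall>j<2*i. chi j x = eps i j}"

definition wc :: "nat \<Rightarrow> nat set \<Rightarrow> complex" where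
  "wc i T = (1/4)^i * (\<Prod>j\<in>T. eps i j)"

lemma norm_wc: "norm (wc i T) = (1/4)^i"
proof -
  have e: "\<And>j. norm (eps i j) = 1" by (simp add: eps_def)
  have "norm (\<Prod>j\<in>T. eps i j) = (\<Prod>j\<in>T. norm (eps i j))" by (rule prod_norm[symmetric])
  also have "\<dots> = 1" by (simp add: e)
  finally have "norm (\<Prod>j\<in>T. eps i j) = 1" .
  then show ?thesis unfolding wc_def norm_mult by (simp add: norm_power)
qed

lemma prod_if01:
  "finite J \<Longrightarrow> (\<Prod>j\<in>J. if P j then 1 else (0::complex)) = (if \<forall>j\<in>J. P j then 1 else 0)"
  by (induction J rule: finite_induct) auto

locale chi_setup =
  fixes M :: "'a::{ab_group_add,t2_space} measure" and chi :: "nat \<Rightarrow> 'a \<Rightarrow> complex" and k :: nat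
  assumes haar: "is_haar M" and cadd: "continuous_on UNIV (\<lambda>p::'a \<times> 'a. fst p + snd p)"
    and two: "\<forall>x::'a. x + x = 0"
    and chi_dual: "\<And>j. j < 2*k \<Longrightarrow> chi j \<in> dual_group"
    and indep: "\<And>T. T \<subseteq> {0..<2*k} \<Longrightarrow> T \<noteq> {} \<Longrightarrow> Xc chi T \<noteq> (\<lambda>x. 1)"
begin

lemma X_dual:
  assumes T: "T \<subseteq> {0..<2*k}" shows "Xc chi T \<in> dual_group"
  unfolding Xc_def
proof (rule dual_prod)
  show "finite T" using T finite_subset by blast
  fix j assume "j \<in> T"
  then have "j < 2*k" using T by auto
  then show "chi j \<in> dual_group" by (rule chi_dual)
qed

lemma chi_pm: "j < 2*k \<Longrightarrow> chi j x = 1 \<or> chi j x = -1"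
  using char_pm[OF chi_dual two] by blast

lemma chi_sq: "j < 2*k \<Longrightarrow> chi j x * chi j x = 1"
  using char_sq[OF chi_dual two] by blast

lemma X_restrict:
  assumes T: "T \<subseteq> {0..<2*k}"
  shows "Xc chi T x = (\<Prod>j\<in>{0..<2*k}. if j \<in> T then chi j x else 1)"
proof -
  have eqI: "{0..<2*k} \<inter> T = T" using T by auto
  have "(\<Prod>j\<in>{0..<2*k} \<inter> T. chi j x) = (\<Prod>j\<in>{0..<2*k}. if j \<in> T then chi j x else 1)"
    by (rule prod.inter_restrict) simp
  then show ?thesis unfolding Xc_def eqI .
qed

lemma X_inj:
  assumes T: "T \<subseteq> {0..<2*k}" and T': "T' \<subseteq> {0..<2*k}" and e: "Xc chi T = Xc chi T'"
  shows "T = T'"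
proof -
  define D where "D = (T - T') \<union> (T' - T)"
  have D: "D \<subseteq> {0..<2*k}" using T T' unfolding D_def by auto
  have "Xc chi D = (\<lambda>x. 1)"
  proof
    fix x
    have "Xc chi D x = (\<Prod>j\<in>{0..<2*k}. if j \<in> D then chi j x else 1)" by (rule X_restrict[OF D])
    also have "\<dots> = (\<Prod>j\<in>{0..<2*k}. (if j \<in> T then chi j x else 1) * (if j \<in> T' then chi j x else 1))"
    proof (rule prod.cong)
      fix j assume "j \<in> {0..<2*k}"
      then have "chi j x * chi j x = 1" using chi_sq by auto
      then show "(if j \<in> D then chi j x else 1) = (if j \<in> T then chi j x else 1) * (if j \<in> T' then chi j x else 1)"
        unfolding D_def by auto
    qed simp
    also have "\<dots> = Xc chi T x * Xc chi T' x"
      by (simp add: prod.distrib X_restrict[OF T] X_restrict[OF T'])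
    also have "\<dots> = Xc chi T x * Xc chi T x" using e by simp
    also have "\<dots> = (\<Prod>j\<in>T. chi j x * chi j x)" by (simp add: Xc_def prod.distrib)
    also have "\<dots> = 1" using T chi_sq by (intro prod.neutral) auto
    finally show "Xc chi D x = 1" .
  qed
  then have "D = {}" using indep[OF D] by auto
  then show ?thesis unfolding D_def by auto
qed

lemma X_empty: "Xc chi {} = (\<lambda>x. 1)"
  unfolding Xc_def by simp

lemma X_is_one: "T \<subseteq> {0..<2*k} \<Longrightarrow> Xc chi T = (\<lambda>x. 1) \<longleftrightarrow> T = {}"
  using X_inj[of T "{}"] X_empty by auto

lemma ind_expand:
  assumes i: "i \<in> {1..k}"
  shows "indicator (Aset chi i) x = (\<Sum>T\<in>Pow {0..<2*i}. wc i T * Xc chi T x)"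
proof -
  define J where "J = {0..<2*i}"
  have finJ: "finite J" unfolding J_def by simp
  have Jk: "\<And>j. j \<in> J \<Longrightarrow> j < 2*k" using i unfolding J_def by auto
  have "indicator (Aset chi i) x = (\<Prod>j\<in>J. if chi j x = eps i j then 1 else (0::complex))"
    by (auto simp: prod_if01[OF finJ] Aset_def J_def indicator_def)
  also have "\<dots> = (\<Prod>j\<in>J. eps i j * chi j x / 2 + 1/2)"
  proof (rule prod.cong)
    fix j assume "j \<in> J"
    then have "chi j x = 1 \<or> chi j x = -1" using chi_pm Jk by blast
    then show "(if chi j x = eps i j then 1 else 0) = eps i j * chi j x / 2 + 1/2"
      by (auto simp: eps_def)
  qed simp
  also have "\<dots> = (\<Sum>T\<in>Pow J. (\<Prod>j\<in>T. eps i j * chi j x / 2) * (\<Prod>j\<in>J-T. 1/2))"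
    by (rule prod_add[OF finJ])
  also have "\<dots> = (\<Sum>T\<in>Pow J. wc i T * Xc chi T x)"
  proof (rule sum.cong)
    fix T assume T: "T \<in> Pow J"
    then have finT: "finite T" using finJ finite_subset by auto
    have TJ: "T \<subseteq> J" using T by auto
    have cT: "card (J - T) = 2*i - card T" using card_Diff_subset[OF finT TJ] unfolding J_def by simp
    have le: "card T \<le> 2*i" using T card_mono[OF finJ] unfolding J_def by fastforce
    have "(\<Prod>j\<in>T. eps i j * chi j x / 2) * (\<Prod>j\<in>J-T. 1/2)
        = (\<Prod>j\<in>T. eps i j) * (\<Prod>j\<in>T. chi j x) * ((1/2)^card T * (1/2)^(2*i - card T))"
      using cT by (simp add: prod.distrib prod_dividef power_one_over)
    also have "(1/2::complex)^card T * (1/2)^(2*i - card T) = (1/2)^(2*i)"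
      using le by (simp add: power_add[symmetric])
    also have "(1/2::complex)^(2*i) = (1/4)^i" by (simp add: power_mult power_one_over)
    finally show "(\<Prod>j\<in>T. eps i j * chi j x / 2) * (\<Prod>j\<in>J-T. 1/2) = wc i T * Xc chi T x"
      by (simp add: wc_def Xc_def)
  qed simp
  finally show ?thesis unfolding J_def .
qed

lemma Aset_closed: "i \<le> k \<Longrightarrow> closed (Aset chi i)"
proof -
  assume i: "i \<le> k"
  have "Aset chi i = (\<Inter>j\<in>{..<2*i}. {x. chi j x = eps i j})" unfolding Aset_def by auto
  moreover have "closed {x. chi j x = eps i j}" if "j < 2*i" for j
    using that i char_cont[OF chi_dual, of j] by (intro closed_Collect_eq) (auto intro: continuous_on_const)
  ultimately show ?thesis by auto
qed

lemma Aset_sets: "i \<le> k \<Longrightarrow> Aset chi i \<in> sets M"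
  using Aset_closed haar unfolding is_haar_def by auto

lemma Aset_disj: "i \<in> {1..k} \<Longrightarrow> i' \<in> {1..k} \<Longrightarrow> i < i' \<Longrightarrow> Aset chi i \<inter> Aset chi i' = {}"
proof -
  assume i: "i \<in> {1..k}" and i': "i' \<in> {1..k}" and lt: "i < i'"
  have "x \<notin> Aset chi i \<inter> Aset chi i'" for x
  proof
    assume x: "x \<in> Aset chi i \<inter> Aset chi i'"
    have "chi (2*i-2) x = eps i (2*i-2)" using x i unfolding Aset_def by auto
    moreover have "chi (2*i-2) x = eps i' (2*i-2)" using x i lt unfolding Aset_def by auto
    moreover have "2*i-2 < 2*i'-2" using i lt by auto
    ultimately show False using i lt by (auto simp: eps_def)
  qed
  then show ?thesis by blast
qed

lemma Aset_disjoint_family: "I \<subseteq> {1..k} \<Longrightarrow> disjoint_family_on (Aset chi) I"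
  unfolding disjoint_family_on_def
  by (metis Aset_disj Int_commute linorder_neqE_nat subsetD)

lemma integrable_Xg:
  "T \<subseteq> {0..<2*k} \<Longrightarrow> \<gamma> \<in> dual_group \<Longrightarrow> integrable M (\<lambda>x. c * (Xc chi T x * cnj (\<gamma> x)))"
  by (intro integrable_mult_right char_integrable[OF haar] dual_mult X_dual dual_cnj)

lemma fourier_union:
  assumes I: "I \<subseteq> {1..k}" and g: "\<gamma> \<in> dual_group"
  shows "fourier_coeff M (indicator (\<Union>i\<in>I. Aset chi i)) \<gamma>
       = (\<Sum>i\<in>I. \<Sum>T\<in>Pow {0..<2*i}. wc i T * (if Xc chi T = \<gamma> then 1 else 0))"
proof -
  have finI: "finite I" using I finite_subset by blast
  have ind: "indicator (\<Union>i\<in>I. Aset chi i) x = (\<Sum>i\<in>I. \<Sum>T\<in>Pow {0..<2*i}. wc i T * Xc chi T x)" for x :: 'a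
  proof -
    have "indicator (\<Union>i\<in>I. Aset chi i) x = (\<Sum>i\<in>I. indicator (Aset chi i) x :: complex)"
      by (rule indicator_UN_disjoint[OF finI Aset_disjoint_family[OF I]])
    also have "\<dots> = (\<Sum>i\<in>I. \<Sum>T\<in>Pow {0..<2*i}. wc i T * Xc chi T x)"
      using I ind_expand by (intro sum.cong) auto
    finally show ?thesis .
  qed
  have sub: "\<And>i T. i \<in> I \<Longrightarrow> T \<in> Pow {0..<2*i} \<Longrightarrow> T \<subseteq> {0..<2*k}" using I by fastforce
  have "fourier_coeff M (indicator (\<Union>i\<in>I. Aset chi i)) \<gamma>
      = integral\<^sup>L M (\<lambda>x. \<Sum>i\<in>I. \<Sum>T\<in>Pow {0..<2*i}. wc i T * (Xc chi T x * cnj (\<gamma> x)))"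
    unfolding fourier_coeff_def ind by (simp add: sum_distrib_right mult.assoc)
  also have "\<dots> = (\<Sum>i\<in>I. integral\<^sup>L M (\<lambda>x. \<Sum>T\<in>Pow {0..<2*i}. wc i T * (Xc chi T x * cnj (\<gamma> x))))"
    by (rule Bochner_Integration.integral_sum) (use sub integrable_Xg g in auto)
  also have "\<dots> = (\<Sum>i\<in>I. \<Sum>T\<in>Pow {0..<2*i}. integral\<^sup>L M (\<lambda>x. wc i T * (Xc chi T x * cnj (\<gamma> x))))"
    by (intro sum.cong refl Bochner_Integration.integral_sum) (use sub integrable_Xg g in auto)
  also have "\<dots> = (\<Sum>i\<in>I. \<Sum>T\<in>Pow {0..<2*i}. wc i T * (if Xc chi T = \<gamma> then 1 else 0))"
    by (intro sum.cong refl) (simp add: char_orth[OF haar cadd X_dual g] sub)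
  finally show ?thesis .
qed

lemma measure_Aset:
  assumes i: "i \<in> {1..k}"
  shows "measure M (Aset chi i) = (1/4)^i"
proof -
  have sM: "Aset chi i \<in> sets M" using i Aset_sets by auto
  have "complex_of_real (measure M (Aset chi i)) = integral\<^sup>L M (\<lambda>x. complex_of_real (indicator (Aset chi i) x))"
    using haar_space[OF haar] by simp
  also have "(\<lambda>x. complex_of_real (indicator (Aset chi i) x)) = (\<lambda>x. indicator (Aset chi i) x * cnj 1)"
    by (auto simp: indicator_def)
  also have "integral\<^sup>L M \<dots> = fourier_coeff M (indicator (\<Union>i'\<in>{i}. Aset chi i')) (\<lambda>x. 1)"
    unfolding fourier_coeff_def by simp
  also have "\<dots> = (\<Sum>T\<in>Pow {0..<2*i}. wc i T * (if Xc chi T = (\<lambda>x. 1) then 1 else 0))"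
    using fourier_union[of "{i}" "\<lambda>x. 1"] i dual_one by simp
  also have "\<dots> = (\<Sum>T\<in>Pow {0..<2*i}. if T = {} then wc i T else 0)"
  proof (rule sum.cong)
    fix T assume "T \<in> Pow {0..<2*i}"
    then have "T \<subseteq> {0..<2*k}" using i by auto
    then show "wc i T * (if Xc chi T = (\<lambda>x. 1) then 1 else 0) = (if T = {} then wc i T else 0)"
      using X_is_one by simp
  qed simp
  also have "\<dots> = wc i {}" by (simp add: sum.delta')
  also have "\<dots> = complex_of_real ((1/4)^i)" by (simp add: wc_def)
  finally show ?thesis by (simp only: of_real_eq_iff)
qed

end

context chi_setup
begin

lemma A_norm_value:
  "A_norm M (indicator (\<Union>i\<in>{1..k}. Aset chi i))
   = ennreal (\<Sum>T\<in>Pow {0..<2*k}. norm (\<Sum>i\<in>{1..k}. if T \<subseteq> {0..<2*i} then wc i T else 0))"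
proof -
  define U where "U = {0..<2*k}"
  define F where "F \<gamma> = fourier_coeff M (indicator (\<Union>i\<in>{1..k}. Aset chi i)) \<gamma>" for \<gamma>
  define c where "c T = (\<Sum>i\<in>{1..k}. if T \<subseteq> {0..<2*i} then wc i T else 0)" for T
  have F1: "F \<gamma> = (\<Sum>i\<in>{1..k}. \<Sum>T\<in>Pow {0..<2*i}. wc i T * (if Xc chi T = \<gamma> then 1 else 0))"
    if "\<gamma> \<in> dual_group" for \<gamma>
    unfolding F_def by (rule fourier_union[OF _ that]) simp
  have sub: "\<And>i T. i \<in> {1..k} \<Longrightarrow> T \<in> Pow {0..<2*i} \<Longrightarrow> T \<subseteq> U" unfolding U_def by fastforce
  have zero: "F \<gamma> = 0" if g: "\<gamma> \<in> dual_group - Xc chi ` Pow U" for \<gamma>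
  proof -
    have "Xc chi T \<noteq> \<gamma>" if "i \<in> {1..k}" "T \<in> Pow {0..<2*i}" for i T
      using g sub[OF that] by auto
    then show ?thesis using g F1 by simp
  qed
  have val: "F (Xc chi T0) = c T0" if T0: "T0 \<in> Pow U" for T0
  proof -
    have "F (Xc chi T0) = (\<Sum>i\<in>{1..k}. \<Sum>T\<in>Pow {0..<2*i}. wc i T * (if Xc chi T = Xc chi T0 then 1 else 0))"
      using F1 X_dual T0 unfolding U_def by auto
    also have "\<dots> = (\<Sum>i\<in>{1..k}. \<Sum>T\<in>Pow {0..<2*i}. if T = T0 then wc i T else 0)"
    proof (intro sum.cong refl)
      fix i T assume "i \<in> {1..k}" "T \<in> Pow {0..<2*i}"
      then have "T \<subseteq> U" using sub by blast
      then have "Xc chi T = Xc chi T0 \<longleftrightarrow> T = T0" using X_inj T0 unfolding U_def by auto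
      then show "wc i T * (if Xc chi T = Xc chi T0 then 1 else 0) = (if T = T0 then wc i T else 0)" by simp
    qed
    also have "\<dots> = c T0" unfolding c_def by (intro sum.cong refl) (simp add: sum.delta')
    finally show ?thesis .
  qed
  have inj: "inj_on (Xc chi) (Pow U)" using X_inj unfolding U_def inj_on_def by auto
  have imgsub: "Xc chi ` Pow U \<subseteq> dual_group" using X_dual unfolding U_def by auto
  have "A_norm M (indicator (\<Union>i\<in>{1..k}. Aset chi i)) = (\<Sum>\<^sub>\<infinity>\<gamma>\<in>dual_group. ennreal (norm (F \<gamma>)))"
    unfolding A_norm_def F_def ..
  also have "\<dots> = (\<Sum>\<^sub>\<infinity>\<gamma>\<in>Xc chi ` Pow U. ennreal (norm (F \<gamma>)))"
    by (rule infsum_cong_neutral) (use imgsub zero in auto)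
  also have "\<dots> = (\<Sum>\<gamma>\<in>Xc chi ` Pow U. ennreal (norm (F \<gamma>)))"
    unfolding U_def by simp
  also have "\<dots> = (\<Sum>T\<in>Pow U. ennreal (norm (F (Xc chi T))))"
    by (rule sum.reindex[OF inj, unfolded comp_def])
  also have "\<dots> = (\<Sum>T\<in>Pow U. ennreal (norm (c T)))"
    by (intro sum.cong refl) (simp add: val)
  also have "\<dots> = ennreal (\<Sum>T\<in>Pow U. norm (c T))" by simp
  finally show ?thesis unfolding U_def c_def .
qed

lemma Aset_coset:
  assumes i: "i \<in> {1..k}"
  shows "\<exists>H x. add_subgroup H \<and> Aset chi i = (\<lambda>y. x + y) ` H"
proof -
  have "Aset chi i \<noteq> {}" using measure_Aset[OF i] by auto
  then obtain x0 where x0: "x0 \<in> Aset chi i" by auto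
  define H where "H = {y. \<forall>j<2*i. chi j y = 1}"
  have cd: "chi j \<in> dual_group" if "j < 2*i" for j using that i chi_dual by auto
  have "add_subgroup H"
    unfolding add_subgroup_def H_def
  proof (intro conjI ballI)
    show "0 \<in> {y. \<forall>j<2 * i. chi j y = 1}" using cd char_0 by auto
    fix x y assume x: "x \<in> {y. \<forall>j<2 * i. chi j y = 1}"
    show "- x \<in> {y. \<forall>j<2 * i. chi j y = 1}"
    proof (intro CollectI allI impI)
      fix j assume j: "j < 2*i"
      have "chi j (- x + x) = chi j (-x) * chi j x" using char_mult[OF cd[OF j]] by blast
      then show "chi j (-x) = 1" using x j char_0[OF cd[OF j]] by simp
    qed
    assume y: "y \<in> {y. \<forall>j<2 * i. chi j y = 1}"
    show "x + y \<in> {y. \<forall>j<2 * i. chi j y = 1}" using x y char_mult[OF cd] by auto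
  qed
  moreover have "Aset chi i = (\<lambda>y. x0 + y) ` H"
  proof
    show "(\<lambda>y. x0 + y) ` H \<subseteq> Aset chi i"
      using x0 char_mult[OF cd] unfolding H_def Aset_def by auto
    show "Aset chi i \<subseteq> (\<lambda>y. x0 + y) ` H"
    proof
      fix z assume z: "z \<in> Aset chi i"
      have "z - x0 \<in> H" unfolding H_def
      proof (intro CollectI allI impI)
        fix j assume j: "j < 2*i"
        have "chi j z = chi j (z - x0) * chi j x0" using char_mult[OF cd[OF j], of "z - x0" x0] by simp
        moreover have "chi j z = chi j x0" using z x0 j unfolding Aset_def by auto
        moreover have "chi j x0 \<noteq> 0" using char_norm[OF cd[OF j], of x0] by auto
        ultimately show "chi j (z - x0) = 1" by simp
      qed
      moreover have "z = x0 + (z - x0)" by simp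
      ultimately show "z \<in> (\<lambda>y. x0 + y) ` H" by blast
    qed
  qed
  ultimately show ?thesis by blast
qed

lemma part2:
  "\<exists>(A :: 'a set) (As :: nat \<Rightarrow> 'a set).
            A \<in> sets M \<and> measure M A = alpha k
          \<and> A = (\<Union>i\<in>{1..k}. As i)
          \<and> disjoint_family_on As {1..k}
          \<and> (\<forall>i\<in>{1..k}. As i \<in> sets M \<and> measure M (As i) = (1/4) ^ i
                \<and> (\<exists>H x. add_subgroup H \<and> As i = (\<lambda>y. x + y) ` H))
          \<and> ennreal (real k / 2) \<le> A_norm M (indicator A)
          \<and> A_norm M (indicator A) \<le> ennreal (real k)"
proof (intro exI conjI)
  interpret prob_space M using haar unfolding is_haar_def by auto
  show sA: "(\<Union>i\<in>{1..k}. Aset chi i) \<in> sets M"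
    using Aset_sets by (intro sets.finite_UN) auto
  show "measure M (\<Union>i\<in>{1..k}. Aset chi i) = alpha k"
  proof -
    have "measure M (\<Union>i\<in>{1..k}. Aset chi i) = (\<Sum>i\<in>{1..k}. measure M (Aset chi i))"
      by (rule finite_measure_finite_Union) (use Aset_sets Aset_disjoint_family in auto)
    also have "\<dots> = (\<Sum>i\<in>{1..k}. (1/4)^i)" using measure_Aset by (intro sum.cong) auto
    finally show ?thesis unfolding alpha_def .
  qed
  show "(\<Union>i\<in>{1..k}. Aset chi i) = (\<Union>i\<in>{1..k}. Aset chi i)" ..
  show "disjoint_family_on (Aset chi) {1..k}" by (rule Aset_disjoint_family) simp
  show "\<forall>i\<in>{1..k}. Aset chi i \<in> sets M \<and> measure M (Aset chi i) = (1/4) ^ i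
                \<and> (\<exists>H x. add_subgroup H \<and> Aset chi i = (\<lambda>y. x + y) ` H)"
    using Aset_sets measure_Aset Aset_coset by auto
  show "ennreal (real k / 2) \<le> A_norm M (indicator (\<Union>i\<in>{1..k}. Aset chi i))"
    unfolding A_norm_value by (rule ennreal_leI) (rule comb_lower[OF norm_wc])
  show "A_norm M (indicator (\<Union>i\<in>{1..k}. Aset chi i)) \<le> ennreal (real k)"
    unfolding A_norm_value by (rule ennreal_leI) (rule comb_upper[OF norm_wc])
qed

end

theorem mainTheorem14:
  fixes M :: "'a::{ab_group_add,t2_space} measure" and k :: nat
  assumes "compact (UNIV :: 'a set)"
    and "continuous_on UNIV (\<lambda>p::'a \<times> 'a. fst p + snd p)"
    and "\<forall>x::'a. x + x = 0"
    and "is_haar M"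
    and "k \<ge> 1"
    and "f2_dim_ge (dual_group :: ('a \<Rightarrow> complex) set) (2 * k)"
  shows "(\<forall>V :: ('a \<Rightarrow> complex) set. dual_subgroup V \<and> finite V \<and> card V \<le> 4 ^ k - 1 \<longrightarrow>
            frac (alpha k * real (card V)) * (1 - frac (alpha k * real (card V))) \<ge> 1 / 12)
       \<and> (\<exists>(A :: 'a set) (As :: nat \<Rightarrow> 'a set).
            A \<in> sets M \<and> measure M A = alpha k
          \<and> A = (\<Union>i\<in>{1..k}. As i)
          \<and> disjoint_family_on As {1..k}
          \<and> (\<forall>i\<in>{1..k}. As i \<in> sets M \<and> measure M (As i) = (1/4) ^ i
                \<and> (\<exists>H x. add_subgroup H \<and> As i = (\<lambda>y. x + y) ` H))
          \<and> ennreal (real k / 2) \<le> A_norm M (indicator A)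
          \<and> A_norm M (indicator A) \<le> ennreal (real k))"
proof (intro conjI allI impI)
  fix V :: "('a \<Rightarrow> complex) set"
  assume V: "dual_subgroup V \<and> finite V \<and> card V \<le> 4 ^ k - 1"
  then obtain m where m: "card V = 2^m" using card_pow2[of V] assms(3) by blast
  show "frac (alpha k * real (card V)) * (1 - frac (alpha k * real (card V))) \<ge> 1 / 12"
    using frac_part[of m k] V m by simp
next
  obtain S where S: "S \<subseteq> dual_group" "finite S" "card S = 2 * k"
    and ind: "\<forall>T\<subseteq>S. T \<noteq> {} \<longrightarrow> (\<lambda>x::'a. \<Prod>\<gamma>\<in>T. \<gamma> x) \<noteq> (\<lambda>x. 1)"
    using assms(6) unfolding f2_dim_ge_def by blast
  obtain e where e: "bij_betw e {0..<2*k} S" using ex_bij_betw_nat_finite[OF S(2)] S(3) by auto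
  interpret chi_setup M e k
  proof
    show "is_haar M" by fact
    show "continuous_on UNIV (\<lambda>p::'a \<times> 'a. fst p + snd p)" by fact
    show "\<forall>x::'a. x + x = 0" by fact
    show "\<And>j. j < 2*k \<Longrightarrow> e j \<in> dual_group" using e S(1) bij_betw_apply by fastforce
    fix T assume T: "T \<subseteq> {0..<2*k}" "T \<noteq> {}"
    have inj: "inj_on e T" using bij_betw_imp_inj_on[OF e] T inj_on_subset by blast
    have "Xc e T = (\<lambda>x. \<Prod>\<gamma>\<in>e ` T. \<gamma> x)"
      unfolding Xc_def by (simp add: prod.reindex[OF inj])
    moreover have "e ` T \<subseteq> S" using T e bij_betw_imp_surj_on by blast
    ultimately show "Xc e T \<noteq> (\<lambda>x. 1)" using ind T by auto
  qed
  show "\<exists>(A :: 'a set) (As :: nat \<Rightarrow> 'a set).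
            A \<in> sets M \<and> measure M A = alpha k
          \<and> A = (\<Union>i\<in>{1..k}. As i)
          \<and> disjoint_family_on As {1..k}
          \<and> (\<forall>i\<in>{1..k}. As i \<in> sets M \<and> measure M (As i) = (1/4) ^ i
                \<and> (\<exists>H x. add_subgroup H \<and> As i = (\<lambda>y. x + y) ` H))
          \<and> ennreal (real k / 2) \<le> A_norm M (indicator A)
          \<and> A_norm M (indicator A) \<le> ennreal (real k)"
    by (rule part2)
qed

end
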